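(* Let $\kappa>0$ and let $\{T_i\}$ be the solution of the generalized Lohe matrix model with zero free flow and $\kappa_1=\kappa_2=\kappa$, $$\dot T_i=\kappa(T_cT_i^\dagger T_i-T_iT_c^\dagger T_i)+\kappa(T_iT_i^\dagger T_c-T_iT_c^\dagger T_i),$$ with completely separable initial data $T_i^0=u_i^0\otimes v_i^0=u_i^0(v_i^0)^\top$, where $u_i^0\in\mathbb S^{d_1-1}\subset\mathbb R^{d_1}$ and $v_i^0\in\mathbb S^{d_2-1}\subset\mathbb R^{d_2}$. Assume $$\min_{1\le i,j\le N}\langle u_i^0,u_j^0\rangle>0\quad\text{and}\quad\min_{1\le i,j\le N}\langle v_i^0,v_j^0\rangle>0.$$ Then $\lim_{t\to\infty}\|T_i(t)-T_j(t)\|_{\mathrm F}=0$ for all $1\le i,j\le N$.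
   Context: Notation: - $T_c=\frac1N\sum_kT_k$; - $T^\dagger$ is the conjugate transpose; - $\|\cdot\|_{\mathrm F}$ is the Frobenius norm; - $\langle\cdot,\cdot\rangle$ is the Euclidean inner product; - $\mathbb S^{d-1}$ is the unit sphere of $\mathbb R^d$. *)

theory Defs
  imports "HOL-Analysis.Analysis"
begin

text \<open>Real d1 x d2 matrices are represented as real^'n^'m ('m = d1 rows, 'n = d2 columns).\<close>

definition frob_norm :: "real^'n^'m \<Rightarrow> real" where
  "frob_norm A = sqrt (\<Sum>i\<in>UNIV. \<Sum>j\<in>UNIV. (A $ i $ j)^2)"

definition outer :: "real^'m \<Rightarrow> real^'n \<Rightarrow> real^'n^'m" where
  "outer u v = (\<chi> i j. u $ i * v $ j)"

definition lohe_avg :: "nat \<Rightarrow> (nat \<Rightarrow> real^'n^'m) \<Rightarrow> real^'n^'m" where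
  "lohe_avg N X = (1 / real N) *\<^sub>R (\<Sum>k<N. X k)"

definition lohe_rhs :: "real \<Rightarrow> real^'n^'m \<Rightarrow> real^'n^'m \<Rightarrow> real^'n^'m" where
  "lohe_rhs \<kappa> Tc Ti =
     \<kappa> *\<^sub>R (Tc ** transpose Ti ** Ti - Ti ** transpose Tc ** Ti)
   + \<kappa> *\<^sub>R (Ti ** transpose Ti ** Tc - Ti ** transpose Tc ** Ti)"

end

theory Submission
  imports Defs
begin

lemma mm_add_r: "((A::real^'n^'m) + B) ** C = A ** C + B ** C"
  by (vector matrix_matrix_mult_def sum.distrib[symmetric] field_simps)
lemma mm_diff_r: "((A::real^'n^'m) - B) ** C = A ** C - B ** C"
  by (vector matrix_matrix_mult_def sum_subtractf[symmetric] field_simps)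
lemma mm_diff_l: "(A::real^'n^'m) ** (B - C) = A ** B - A ** C"
  by (vector matrix_matrix_mult_def sum_subtractf[symmetric] field_simps)
lemma mm_scale_l: "(c *\<^sub>R (A::real^'n^'m)) ** B = c *\<^sub>R (A ** B)"
  by (simp add: scalar_matrix_assoc)
lemma mm_scale_r: "(A::real^'n^'m) ** (c *\<^sub>R B) = c *\<^sub>R (A ** B)"
  by (simp add: matrix_matrix_mult_def sum_distrib_left mult_ac vec_eq_iff)
lemma tr_scale: "trace (c *\<^sub>R (A::real^'n^'n)) = c * trace A"
  by (simp add: trace_def sum_distrib_left)
lemma tr_transpose: "trace (transpose (A::real^'n^'n)) = trace A"
  by (simp add: trace_def transpose_def)
lemma transpose_add: "transpose ((A::real^'n^'m) + B) = transpose A + transpose B"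
  by (simp add: transpose_def vec_eq_iff)
lemma transpose_diff: "transpose ((A::real^'n^'m) - B) = transpose A - transpose B"
  by (simp add: transpose_def vec_eq_iff)
lemma transpose_sum: "transpose (\<Sum>k\<in>K. (A k::real^'n^'m)) = (\<Sum>k\<in>K. transpose (A k))"
  by (induction K rule: infinite_finite_induct) (auto simp: transpose_add transpose_def vec_eq_iff)

lemma transpose_outer: "transpose (outer u v) = outer v u"
  by (simp add: transpose_def outer_def vec_eq_iff mult.commute)
lemma outer_mult: "outer u v ** outer w z = (v \<bullet> w) *\<^sub>R outer u z"
  by (simp add: outer_def matrix_matrix_mult_def vec_eq_iff inner_vec_def sum_distrib_left sum_distrib_right mult_ac)
lemma mat_outer: "(A::real^'n^'m) ** outer v w = outer (A *v v) w"
  by (simp add: outer_def matrix_matrix_mult_def matrix_vector_mult_def vec_eq_iff sum_distrib_right sum_distrib_left mult.commute mult.left_commute)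
lemma outer_mat: "outer u v ** (A::real^'k^'n) = outer u (transpose A *v v)"
  by (simp add: outer_def matrix_matrix_mult_def matrix_vector_mult_def transpose_def vec_eq_iff sum_distrib_left mult_ac)
lemma tr_outer: "trace (outer u v) = u \<bullet> v"
  by (simp add: trace_def outer_def inner_vec_def)
lemma outer_mv: "outer u v *v w = (v \<bullet> w) *\<^sub>R u"
  by (simp add: outer_def matrix_vector_mult_def vec_eq_iff inner_vec_def sum_distrib_left sum_distrib_right mult.commute mult.left_commute)
lemma outer_scale_l: "outer (c *\<^sub>R u) v = c *\<^sub>R outer u v"
  by (simp add: outer_def vec_eq_iff)
lemma outer_scale_r: "outer u (c *\<^sub>R v) = c *\<^sub>R outer u v"
  by (simp add: outer_def vec_eq_iff mult_ac)
lemma outer_add_l: "outer (u + w) v = outer u v + outer w v"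
  by (simp add: outer_def vec_eq_iff algebra_simps)
lemma outer_add_r: "outer u (v + w) = outer u v + outer u w"
  by (simp add: outer_def vec_eq_iff algebra_simps)
lemma outer_diff_l: "outer (u - w) v = outer u v - outer w v"
  by (simp add: outer_def vec_eq_iff algebra_simps)
lemma outer_diff_r: "outer u (v - w) = outer u v - outer u w"
  by (simp add: outer_def vec_eq_iff algebra_simps)
lemma outer_neg: "outer (-u) (-v) = outer u v"
  by (simp add: outer_def vec_eq_iff)
lemma sum_mv: "(\<Sum>k\<in>K. (A k::real^'n^'m)) *v w = (\<Sum>k\<in>K. A k *v w)"
  by (induction K rule: infinite_finite_induct) (auto simp: matrix_vector_mult_add_rdistrib)

lemma tr_swap: "trace ((A::real^'n^'m) ** B) = trace (B ** A)"
  by (rule trace_mul_sym)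

lemma tr_T: "trace (Y::real^'n^'n) = trace (transpose Y)"
  by (simp add: tr_transpose)

lemma key1:
  fixes X C :: "real^'n^'m"
  shows "trace (transpose X ** lohe_rhs \<kappa> C X) = 0"
proof -
  let ?Z = "trace (transpose X ** C ** transpose X ** X)"
  have exp: "trace (transpose X ** lohe_rhs \<kappa> C X) =
    \<kappa> * (trace (transpose X ** C ** transpose X ** X) - trace (transpose X ** X ** transpose C ** X))
    + \<kappa> * (trace (transpose X ** X ** transpose X ** C) - trace (transpose X ** X ** transpose C ** X))"
    unfolding lohe_rhs_def
    by (simp only: matrix_add_ldistrib mm_diff_l mm_scale_r trace_add trace_sub tr_scale matrix_mul_assoc)
  have e1: "trace (transpose X ** X ** transpose C ** X) = ?Z"
    by (subst tr_T) (simp only: matrix_transpose_mul transpose_transpose matrix_mul_assoc)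
  have e2: "trace (transpose X ** X ** transpose X ** C) = ?Z"
    using tr_swap[of "transpose X ** X" "transpose X ** C"] by (simp only: matrix_mul_assoc)
  show ?thesis unfolding exp e1 e2 by simp
qed

lemma key2:
  fixes X C :: "real^'n^'m"
  shows "trace ((transpose X ** X) ** (transpose X ** lohe_rhs \<kappa> C X)) = 0"
proof -
  let ?P = "transpose X ** X"
  let ?Z = "trace (transpose X ** X ** transpose X ** X ** transpose X ** C)"
  have exp: "trace ((transpose X ** X) ** (transpose X ** lohe_rhs \<kappa> C X)) =
    \<kappa> * (trace (transpose X ** X ** transpose X ** C ** transpose X ** X)
       - trace (transpose X ** X ** transpose X ** X ** transpose C ** X))
    + \<kappa> * (trace (transpose X ** X ** transpose X ** X ** transpose X ** C)
       - trace (transpose X ** X ** transpose X ** X ** transpose C ** X))"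
    unfolding lohe_rhs_def
    by (simp only: matrix_add_ldistrib mm_diff_l mm_scale_r trace_add trace_sub tr_scale matrix_mul_assoc)
  have e1: "trace (transpose X ** X ** transpose X ** X ** transpose C ** X) = ?Z"
  proof -
    have "trace (?P ** transpose X ** X ** transpose C ** X) = trace (transpose X ** C ** ?P ** ?P)"
      by (subst tr_T) (simp only: matrix_transpose_mul transpose_transpose matrix_mul_assoc)
    also have "\<dots> = trace (?P ** ?P ** (transpose X ** C))"
      using tr_swap[of "transpose X ** C" "?P ** ?P"] by (simp only: matrix_mul_assoc)
    finally show ?thesis by (simp only: matrix_mul_assoc)
  qed
  have e2: "trace (transpose X ** X ** transpose X ** C ** transpose X ** X) = ?Z"
  proof -
    have "trace (?P ** transpose X ** C ** ?P) = trace (?P ** (?P ** transpose X ** C))"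
      using tr_swap[of "?P ** transpose X ** C" "?P"] by (simp only: matrix_mul_assoc)
    then show ?thesis by (simp only: matrix_mul_assoc)
  qed
  show ?thesis unfolding exp e1 e2 by simp
qed

lemma bb_mm: "bounded_bilinear (\<lambda>(A::real^'n^'m) (B::real^'k^'n). A ** B)"
  unfolding bilinear_conv_bounded_bilinear[symmetric] bilinear_def
  by (auto intro!: linearI simp: matrix_add_ldistrib mm_add_r mm_scale_l mm_scale_r)

lemma bl_tp: "bounded_linear (transpose :: real^'n^'m \<Rightarrow> real^'m^'n)"
  unfolding linear_conv_bounded_linear[symmetric]
  by (auto intro!: linearI simp: transpose_add transpose_scalar)

lemma bl_tr: "bounded_linear (trace :: real^'n^'n \<Rightarrow> real)"
  unfolding linear_conv_bounded_linear[symmetric]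
  by (auto intro!: linearI simp: trace_add tr_scale)

lemma d_mm:
  fixes A :: "real \<Rightarrow> real^'n^'m" and B :: "real \<Rightarrow> real^'k^'n"
  assumes "(A has_vector_derivative A') (at t within S)" "(B has_vector_derivative B') (at t within S)"
  shows "((\<lambda>t. A t ** B t) has_vector_derivative (A t ** B' + A' ** B t)) (at t within S)"
  using bounded_bilinear.has_vector_derivative[OF bb_mm assms] .

lemma d_tp:
  fixes A :: "real \<Rightarrow> real^'n^'m"
  assumes "(A has_vector_derivative A') F"
  shows "((\<lambda>t. transpose (A t)) has_vector_derivative transpose A') F"
  using bounded_linear.has_vector_derivative[OF bl_tp assms] .

lemma d_tr:
  fixes A :: "real \<Rightarrow> real^'n^'n"
  assumes "(A has_vector_derivative A') F"
  shows "((\<lambda>t. trace (A t)) has_real_derivative trace A') F"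
  using bounded_linear.has_vector_derivative[OF bl_tr assms]
  by (simp add: has_real_derivative_iff_has_vector_derivative)

lemma hfd_eq: "(f has_real_derivative a) F \<Longrightarrow> a = b \<Longrightarrow> (f has_real_derivative b) F" by simp

lemma rank_inv:
  fixes X :: "real \<Rightarrow> real^'n^'m" and C :: "real \<Rightarrow> real^'n^'m"
  assumes d: "\<And>t. t \<ge> 0 \<Longrightarrow> (X has_vector_derivative lohe_rhs \<kappa> (C t) (X t)) (at t within {0..})"
    and t: "t \<ge> 0"
  shows "trace (transpose (X t) ** X t) = trace (transpose (X 0) ** X 0)"
    "trace ((transpose (X t) ** X t) ** (transpose (X t) ** X t)) = trace ((transpose (X 0) ** X 0) ** (transpose (X 0) ** X 0))"
proof -
  have "\<exists>c. \<forall>x\<in>{0..}. trace (transpose (X x) ** X x) = c"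
  proof (rule has_field_derivative_zero_constant)
    fix x :: real assume x: "x \<in> {0..}"
    let ?D = "lohe_rhs \<kappa> (C x) (X x)"
    have dx: "(X has_vector_derivative ?D) (at x within {0..})" using d x by auto
    have e: "trace (transpose (X x) ** ?D + transpose ?D ** X x) = 0"
      using key1[of "X x" \<kappa> "C x"] tr_T[of "transpose ?D ** X x"]
      by (simp add: trace_add matrix_transpose_mul)
    show "((\<lambda>x. trace (transpose (X x) ** X x)) has_real_derivative 0) (at x within {0..})"
      by (rule hfd_eq[OF d_tr[OF d_mm[OF d_tp[OF dx] dx]] e])
  qed simp
  then show "trace (transpose (X t) ** X t) = trace (transpose (X 0) ** X 0)" using t by force
  have "\<exists>c. \<forall>x\<in>{0..}. trace ((transpose (X x) ** X x) ** (transpose (X x) ** X x)) = c"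
  proof (rule has_field_derivative_zero_constant)
    fix x :: real assume x: "x \<in> {0..}"
    let ?D = "lohe_rhs \<kappa> (C x) (X x)"
    let ?P = "transpose (X x) ** X x"
    let ?P' = "transpose (X x) ** ?D + transpose ?D ** X x"
    have dx: "(X has_vector_derivative ?D) (at x within {0..})" using d x by auto
    have dP: "((\<lambda>x. transpose (X x) ** X x) has_vector_derivative ?P') (at x within {0..})"
      using d_mm[OF d_tp[OF dx] dx] .
    have k2: "trace (?P ** (transpose (X x) ** ?D)) = 0" by (rule key2)
    have k3: "trace (?P ** (transpose ?D ** X x)) = 0"
    proof -
      have "trace (?P ** (transpose ?D ** X x)) = trace (transpose (X x) ** ?D ** ?P)"
        by (subst tr_T) (simp add: matrix_transpose_mul matrix_mul_assoc)
      also have "\<dots> = trace (?P ** (transpose (X x) ** ?D))"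
        by (rule tr_swap)
      finally show ?thesis using k2 by simp
    qed
    have e: "trace (?P ** ?P' + ?P' ** ?P) = 0"
      using k2 k3 tr_swap[of ?P' ?P]
      by (simp add: trace_add matrix_add_ldistrib)
    show "((\<lambda>x. trace ((transpose (X x) ** X x) ** (transpose (X x) ** X x))) has_real_derivative 0) (at x within {0..})"
      by (rule hfd_eq[OF d_tr[OF d_mm[OF dP dP]] e])
  qed simp
  then show "trace ((transpose (X t) ** X t) ** (transpose (X t) ** X t)) = trace ((transpose (X 0) ** X 0) ** (transpose (X 0) ** X 0))" using t by force
qed

lemma tr_PP: "trace (transpose X ** (X::real^'n^'m)) = (\<Sum>c\<in>UNIV. \<Sum>a\<in>UNIV. (X$a$c)^2)"
  by (simp add: trace_def matrix_matrix_mult_def transpose_def power2_eq_square)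

lemma tr_P2: "trace ((transpose X ** (X::real^'n^'m)) ** (transpose X ** X)) =
   (\<Sum>c\<in>UNIV. \<Sum>d\<in>UNIV. (\<Sum>a\<in>UNIV. X$a$c * X$a$d) * (\<Sum>b\<in>UNIV. X$b$d * X$b$c))"
  by (simp add: trace_def matrix_matrix_mult_def transpose_def)

lemma minor_cd:
  fixes X :: "real^'n^'m"
  shows "(\<Sum>a\<in>UNIV. \<Sum>b\<in>UNIV. (X$a$c * X$b$d - X$a$d * X$b$c)^2) =
    (\<Sum>a\<in>UNIV. (X$a$c)^2) * (\<Sum>b\<in>UNIV. (X$b$d)^2) + (\<Sum>a\<in>UNIV. (X$a$d)^2) * (\<Sum>b\<in>UNIV. (X$b$c)^2)
    - 2 * ((\<Sum>a\<in>UNIV. X$a$c * X$a$d) * (\<Sum>b\<in>UNIV. X$b$d * X$b$c))"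
proof -
  have 1: "(\<Sum>a\<in>UNIV. \<Sum>b\<in>UNIV. (X$a$c * X$b$d)^2) = (\<Sum>a\<in>UNIV. (X$a$c)^2) * (\<Sum>b\<in>UNIV. (X$b$d)^2)"
    by (simp add: sum_product power_mult_distrib)
  have 2: "(\<Sum>a\<in>UNIV. \<Sum>b\<in>UNIV. (X$a$d * X$b$c)^2) = (\<Sum>a\<in>UNIV. (X$a$d)^2) * (\<Sum>b\<in>UNIV. (X$b$c)^2)"
    by (simp add: sum_product power_mult_distrib)
  have 3: "(\<Sum>a\<in>UNIV. \<Sum>b\<in>UNIV. (X$a$c * X$b$d) * (X$a$d * X$b$c)) = (\<Sum>a\<in>UNIV. X$a$c * X$a$d) * (\<Sum>b\<in>UNIV. X$b$d * X$b$c)"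
    by (simp add: sum_product mult_ac)
  have e: "(\<Sum>a\<in>UNIV. \<Sum>b\<in>UNIV. (X$a$c * X$b$d - X$a$d * X$b$c)^2) =
     (\<Sum>a\<in>UNIV. \<Sum>b\<in>UNIV. (X$a$c * X$b$d)^2) + (\<Sum>a\<in>UNIV. \<Sum>b\<in>UNIV. (X$a$d * X$b$c)^2)
     - 2 * (\<Sum>a\<in>UNIV. \<Sum>b\<in>UNIV. (X$a$c * X$b$d) * (X$a$d * X$b$c))"
    by (simp only: power2_diff sum.distrib sum_subtractf sum_distrib_left mult.assoc)
  show ?thesis unfolding e 1 2 3 ..
qed

lemma phi_eq:
  fixes X :: "real^'n^'m"
  shows "(\<Sum>c\<in>UNIV. \<Sum>d\<in>UNIV. \<Sum>a\<in>UNIV. \<Sum>b\<in>UNIV. (X$a$c * X$b$d - X$a$d * X$b$c)^2)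
     = 2 * (trace (transpose X ** X))^2 - 2 * trace ((transpose X ** X) ** (transpose X ** X))"
  unfolding minor_cd tr_PP tr_P2
  by (simp add: sum_subtractf sum.distrib sum_product[symmetric] power2_eq_square sum_distrib_left algebra_simps)

lemma rank_one:
  fixes X :: "real^'n^'m"
  assumes s1: "trace (transpose X ** X) = 1" and s2: "trace ((transpose X ** X) ** (transpose X ** X)) = 1"
  shows "\<exists>u v. norm u = 1 \<and> norm v = 1 \<and> X = outer u v"
proof -
  have phi0: "(\<Sum>c\<in>UNIV. \<Sum>d\<in>UNIV. \<Sum>a\<in>UNIV. \<Sum>b\<in>UNIV. (X$a$c * X$b$d - X$a$d * X$b$c)^2) = 0"
    using phi_eq[of X] s1 s2 by simp
  have minor: "X$a$c * X$b$d - X$a$d * X$b$c = 0" for a b c d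
  proof -
    have "(\<Sum>d\<in>UNIV. \<Sum>a\<in>UNIV. \<Sum>b\<in>UNIV. (X$a$c * X$b$d - X$a$d * X$b$c)^2) = 0"
      using phi0 by (subst (asm) sum_nonneg_eq_0_iff) (auto intro!: sum_nonneg)
    then have "(\<Sum>a\<in>UNIV. \<Sum>b\<in>UNIV. (X$a$c * X$b$d - X$a$d * X$b$c)^2) = 0"
      by (subst (asm) sum_nonneg_eq_0_iff) (auto intro!: sum_nonneg)
    then have "(\<Sum>b\<in>UNIV. (X$a$c * X$b$d - X$a$d * X$b$c)^2) = 0"
      by (subst (asm) sum_nonneg_eq_0_iff) (auto intro!: sum_nonneg)
    then have "(X$a$c * X$b$d - X$a$d * X$b$c)^2 = 0"
      by (subst (asm) sum_nonneg_eq_0_iff) (auto intro!: sum_nonneg)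
    then show ?thesis by simp
  qed
  obtain a c where ac: "X$a$c \<noteq> 0"
  proof -
    have "\<exists>a c. X$a$c \<noteq> 0"
    proof (rule ccontr)
      assume "\<not> ?thesis"
      then have "X = 0" by (simp add: vec_eq_iff)
      then show False using s1 by (simp add: trace_def matrix_matrix_mult_def transpose_def)
    qed
    then show ?thesis using that by blast
  qed
  define u where "u = (\<chi> r. X$r$c)"
  define w where "w = (\<chi> s. X$a$s / X$a$c)"
  have Xuw: "X = outer u w"
  proof -
    have h: "X$r$s = X$r$c * (X$a$s / X$a$c)" for r s
      using minor[of a c r s] ac by (simp add: field_simps)
    have e: "(outer u w)$r$s = X$r$c * (X$a$s / X$a$c)" for r s
      by (simp add: outer_def u_def w_def)
    show ?thesis by (simp only: vec_eq_iff) (metis h e)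
  qed
  have "trace (transpose (outer u w) ** outer u w) = (u \<bullet> u) * (w \<bullet> w)"
    by (simp add: transpose_outer outer_mult tr_scale tr_outer)
  then have nn: "norm u ^ 2 * norm w ^ 2 = 1" using s1 Xuw by (simp add: power2_norm_eq_inner)
  have un: "norm u \<noteq> 0" using nn by auto
  show ?thesis
  proof (intro exI conjI)
    show "norm ((1 / norm u) *\<^sub>R u) = 1" using un by simp
    have "(norm u * norm w) ^ 2 = 1" using nn by (simp add: power_mult_distrib)
    moreover have "0 \<le> norm u * norm w" by simp
    ultimately have "norm u * norm w = 1" by (smt (verit) power2_eq_1_iff)
    then show "norm (norm u *\<^sub>R w) = 1" by simp
    show "X = outer ((1 / norm u) *\<^sub>R u) (norm u *\<^sub>R w)"
      using Xuw un by (simp add: outer_scale_l outer_scale_r)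
  qed
qed

definition sq :: "real^'n^'m \<Rightarrow> real^'n^'m \<Rightarrow> real" where
  "sq A B = trace ((A ** transpose A) ** (B ** transpose B))"
definition dsq :: "real^'n^'m \<Rightarrow> real^'n^'m \<Rightarrow> real^'n^'m \<Rightarrow> real^'n^'m \<Rightarrow> real" where
  "dsq A A' B B' = trace ((A' ** transpose A + A ** transpose A') ** (B ** transpose B)
      + (A ** transpose A) ** (B' ** transpose B + B ** transpose B'))"

lemma d_sq:
  fixes A B :: "real \<Rightarrow> real^'n^'m"
  assumes "(A has_vector_derivative A') (at t within S)" "(B has_vector_derivative B') (at t within S)"
  shows "((\<lambda>t. sq (A t) (B t)) has_real_derivative dsq (A t) A' (B t) B') (at t within S)"
  unfolding sq_def
  apply (rule hfd_eq[OF d_tr[OF d_mm[OF d_mm[OF assms(1) d_tp[OF assms(1)]] d_mm[OF assms(2) d_tp[OF assms(2)]]]]])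
  unfolding dsq_def add.commute[of "A t ** transpose A'"] add.commute[of "B t ** transpose B'"]
  by (rule arg_cong[where f=trace], rule add.commute)

lemma rhs_outer:
  fixes u :: "real^'m" and v :: "real^'n"
  assumes "norm u = 1" "norm v = 1"
  shows "lohe_rhs \<kappa> C (outer u v) =
    outer (\<kappa> *\<^sub>R (C *v v - (u \<bullet> (C *v v)) *\<^sub>R u)) v + outer u (\<kappa> *\<^sub>R (transpose C *v u - (u \<bullet> (C *v v)) *\<^sub>R v))"
proof -
  have uu: "u \<bullet> u = 1" "v \<bullet> v = 1" using assms by (simp_all add: dot_square_norm)
  have c1: "C ** transpose (outer u v) ** outer u v = outer (C *v v) v"
    by (simp add: transpose_outer mat_outer outer_mult uu outer_mv)
  have c2: "outer u v ** transpose C ** outer u v = (u \<bullet> (C *v v)) *\<^sub>R outer u v"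
  proof -
    have "outer u v ** transpose C = outer u (C *v v)" by (simp add: outer_mat)
    then show ?thesis by (simp add: outer_mult inner_commute)
  qed
  have c3: "outer u v ** transpose (outer u v) ** C = outer u (transpose C *v u)"
  proof -
    have "outer u v ** transpose (outer u v) = outer u u" by (simp add: transpose_outer outer_mult uu)
    then show ?thesis by (simp add: outer_mat)
  qed
  show ?thesis
    unfolding lohe_rhs_def c1 c2 c3
    by (simp only: outer_scale_l outer_scale_r outer_diff_l outer_diff_r)
qed

lemma dQ_outer:
  fixes u du :: "real^'m" and v dv :: "real^'n"
  assumes "norm v = 1" "dv \<bullet> v = 0"
  shows "(outer du v + outer u dv) ** transpose (outer u v) + outer u v ** transpose (outer du v + outer u dv)
      = outer du u + outer u du"
proof -
  have vv: "v \<bullet> v = 1" using assms by (simp add: dot_square_norm)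
  show ?thesis using assms(2)
    by (simp add: transpose_outer transpose_add outer_mult mm_add_r matrix_add_ldistrib vv inner_commute)
qed

lemma dsq_outer:
  fixes u du w dw :: "real^'m" and v dv z dz :: "real^'n"
  assumes "norm v = 1" "dv \<bullet> v = 0" "norm z = 1" "dz \<bullet> z = 0"
  shows "dsq (outer u v) (outer du v + outer u dv) (outer w z) (outer dw z + outer w dz)
     = 2 * (u \<bullet> w) * (du \<bullet> w + dw \<bullet> u)"
proof -
  have vv: "v \<bullet> v = 1" "z \<bullet> z = 1" using assms by (simp_all add: dot_square_norm)
  have q1: "outer u v ** transpose (outer u v) = outer u u" "outer w z ** transpose (outer w z) = outer w w"
    by (simp_all add: transpose_outer outer_mult vv)
  show ?thesis
    unfolding dsq_def dQ_outer[OF assms(1,2)] dQ_outer[OF assms(3,4)] q1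
    apply (simp only: mm_add_r matrix_add_ldistrib outer_mult trace_add tr_scale tr_outer)
    apply (simp only: inner_commute[of dw u])
    by (simp add: algebra_simps)
qed

lemma avg_mv:
  "lohe_avg N (\<lambda>k. outer (U k) (V k)) *v w = (1 / real N) *\<^sub>R (\<Sum>k<N. (V k \<bullet> w) *\<^sub>R U k)"
  by (simp add: lohe_avg_def scaleR_matrix_vector_assoc[symmetric] sum_mv outer_mv)

lemma sqrt_le_of_sq: "0 \<le> (y::real) \<Longrightarrow> x \<le> y^2 \<Longrightarrow> sqrt x \<le> y"
  by (metis abs_of_nonneg real_sqrt_abs real_sqrt_le_mono)

lemma inner_le1: "norm (x::'a::real_inner) = 1 \<Longrightarrow> norm y = 1 \<Longrightarrow> x \<bullet> y \<le> 1"
  using norm_cauchy_schwarz[of x y] by simp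

lemma key_sum:
  fixes U :: "nat \<Rightarrow> real^'m" and V :: "nat \<Rightarrow> real^'n"
  assumes ab: "a < N" "b < N"
   and nU: "\<And>k. k < N \<Longrightarrow> norm (U k) = 1"
   and pos: "\<And>k l. k < N \<Longrightarrow> l < N \<Longrightarrow> U k \<bullet> U l > 0 \<and> V k \<bullet> V l > 0"
   and low: "\<And>k l. k < N \<Longrightarrow> l < N \<Longrightarrow> g \<le> (U k \<bullet> U l)^2 \<and> g \<le> (V k \<bullet> V l)^2"
   and eq: "(U a \<bullet> U b)^2 = g" and g0: "0 < g" and g1: "g < 1"
  shows "(\<Sum>l<N. (V l \<bullet> V a) * (U l \<bullet> U b - (U a \<bullet> U l) * (U a \<bullet> U b))) \<ge> sqrt g * (1 - g)"
proof -
  have m: "U a \<bullet> U b = sqrt g" using eq pos[OF ab] by (metis abs_of_pos real_sqrt_abs)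
  have nonneg: "0 \<le> (V l \<bullet> V a) * (U l \<bullet> U b - (U a \<bullet> U l) * (U a \<bullet> U b))" if l: "l \<in> {..<N}" for l
  proof -
    have l': "l < N" using l by simp
    have "sqrt g \<le> U l \<bullet> U b" using low[OF l' ab(2)] pos[OF l' ab(2)] by (intro sqrt_le_of_sq) auto
    moreover have "U a \<bullet> U l \<le> 1" using nU[OF ab(1)] nU[OF l'] by (rule inner_le1)
    moreover have "0 \<le> sqrt g" using g0 by simp
    ultimately have "(U a \<bullet> U l) * sqrt g \<le> U l \<bullet> U b"
      by (smt (verit) mult_right_mono mult_left_le_one_le real_sqrt_ge_zero)
    then show ?thesis using pos[OF l' ab(1)] m by simp
  qed
  have "(V b \<bullet> V a) * (U b \<bullet> U b - (U a \<bullet> U b) * (U a \<bullet> U b))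
        \<le> (\<Sum>l<N. (V l \<bullet> V a) * (U l \<bullet> U b - (U a \<bullet> U l) * (U a \<bullet> U b)))"
    by (rule member_le_sum[where f = "\<lambda>l. (V l \<bullet> V a) * (U l \<bullet> U b - (U a \<bullet> U l) * (U a \<bullet> U b))", OF _ nonneg]) (use ab in auto)
  moreover have "U b \<bullet> U b = 1" using nU[OF ab(2)] by (simp add: dot_square_norm)
  moreover have "sqrt g \<le> V b \<bullet> V a" using low[OF ab(2,1)] pos[OF ab(2,1)] by (intro sqrt_le_of_sq) auto
  ultimately show ?thesis using eq g1
    by (smt (verit, best) mult_right_mono power2_eq_square)
qed

lemma ptwise:
  fixes U :: "nat \<Rightarrow> real^'m" and V :: "nat \<Rightarrow> real^'n"
  assumes kp: "\<kappa> > 0" and ij: "i < N" "j < N"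
   and nU: "\<And>k. k < N \<Longrightarrow> norm (U k) = 1"
   and nV: "\<And>k. k < N \<Longrightarrow> norm (V k) = 1"
   and pos: "\<And>k l. k < N \<Longrightarrow> l < N \<Longrightarrow> U k \<bullet> U l > 0 \<and> V k \<bullet> V l > 0"
   and low: "\<And>k l. k < N \<Longrightarrow> l < N \<Longrightarrow> g \<le> (U k \<bullet> U l)^2 \<and> g \<le> (V k \<bullet> V l)^2"
   and eq: "(U i \<bullet> U j)^2 = g" and g0: "0 < g" and g1: "g < 1"
  shows "dsq (outer (U i) (V i)) (lohe_rhs \<kappa> (lohe_avg N (\<lambda>k. outer (U k) (V k))) (outer (U i) (V i)))
             (outer (U j) (V j)) (lohe_rhs \<kappa> (lohe_avg N (\<lambda>k. outer (U k) (V k))) (outer (U j) (V j)))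
         \<ge> 4 * \<kappa> / N * g * (1 - g)"
proof -
  define C where "C = lohe_avg N (\<lambda>k. outer (U k) (V k))"
  define du where "du k = \<kappa> *\<^sub>R (C *v V k - (U k \<bullet> (C *v V k)) *\<^sub>R U k)" for k
  define dv where "dv k = \<kappa> *\<^sub>R (transpose C *v U k - (U k \<bullet> (C *v V k)) *\<^sub>R V k)" for k
  have rhs: "lohe_rhs \<kappa> C (outer (U k) (V k)) = outer (du k) (V k) + outer (U k) (dv k)" if "k < N" for k
    unfolding du_def dv_def by (rule rhs_outer[OF nU[OF that] nV[OF that]])
  have perp: "dv k \<bullet> V k = 0" if "k < N" for k
  proof -
    have "V k \<bullet> V k = 1" using nV[OF that] by (simp add: dot_square_norm)
    then show ?thesis unfolding dv_def
      by (simp add: inner_diff_left dot_lmul_matrix)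
  qed
  have Cv: "(C *v V a) \<bullet> w = (1 / real N) * (\<Sum>l<N. (V l \<bullet> V a) * (U l \<bullet> w))" for a w
    unfolding C_def avg_mv by (simp add: inner_sum_left sum_distrib_left)
  have du_w: "du a \<bullet> U b = \<kappa> / N * (\<Sum>l<N. (V l \<bullet> V a) * (U l \<bullet> U b - (U a \<bullet> U l) * (U a \<bullet> U b)))" for a b
  proof -
    have "du a \<bullet> U b = \<kappa> * ((C *v V a) \<bullet> U b - (U a \<bullet> (C *v V a)) * (U a \<bullet> U b))"
      unfolding du_def by (simp add: inner_diff_left)
    also have "\<dots> = \<kappa> * ((1 / real N) * (\<Sum>l<N. (V l \<bullet> V a) * (U l \<bullet> U b))
        - ((1 / real N) * (\<Sum>l<N. (V l \<bullet> V a) * (U l \<bullet> U a))) * (U a \<bullet> U b))"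
      using Cv[of a "U b"] Cv[of a "U a"] by (simp add: inner_commute)
    also have "\<dots> = \<kappa> / N * (\<Sum>l<N. (V l \<bullet> V a) * (U l \<bullet> U b - (U a \<bullet> U l) * (U a \<bullet> U b)))"
      by (simp add: sum_subtractf sum_distrib_right sum_distrib_left algebra_simps inner_commute)
    finally show ?thesis .
  qed
  have d: "dsq (outer (U i) (V i)) (lohe_rhs \<kappa> C (outer (U i) (V i))) (outer (U j) (V j)) (lohe_rhs \<kappa> C (outer (U j) (V j)))
     = 2 * (U i \<bullet> U j) * (du i \<bullet> U j + du j \<bullet> U i)"
    unfolding rhs[OF ij(1)] rhs[OF ij(2)]
    by (rule dsq_outer[OF nV[OF ij(1)] perp[OF ij(1)] nV[OF ij(2)] perp[OF ij(2)]])
  have s1: "(\<Sum>l<N. (V l \<bullet> V i) * (U l \<bullet> U j - (U i \<bullet> U l) * (U i \<bullet> U j))) \<ge> sqrt g * (1 - g)"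
    by (rule key_sum[OF ij nU pos low eq g0 g1])
  have eq': "(U j \<bullet> U i)^2 = g" using eq by (simp add: inner_commute)
  have s2: "(\<Sum>l<N. (V l \<bullet> V j) * (U l \<bullet> U i - (U j \<bullet> U l) * (U j \<bullet> U i))) \<ge> sqrt g * (1 - g)"
    by (rule key_sum[OF ij(2,1) nU pos low eq' g0 g1])
  have m: "U i \<bullet> U j = sqrt g" using eq pos[OF ij] by (metis abs_of_pos real_sqrt_abs)
  have Npos: "real N > 0" using ij by simp
  have "du i \<bullet> U j + du j \<bullet> U i \<ge> \<kappa> / N * (2 * (sqrt g * (1 - g)))"
  proof -
    let ?S1 = "(\<Sum>l<N. (V l \<bullet> V i) * (U l \<bullet> U j - (U i \<bullet> U l) * (U i \<bullet> U j)))"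
    let ?S2 = "(\<Sum>l<N. (V l \<bullet> V j) * (U l \<bullet> U i - (U j \<bullet> U l) * (U j \<bullet> U i)))"
    have e: "du i \<bullet> U j + du j \<bullet> U i = \<kappa> / N * (?S1 + ?S2)" unfolding du_w by (simp add: distrib_left)
    have c0: "0 \<le> \<kappa> / N" using kp Npos by simp
    have "\<kappa> / N * (2 * (sqrt g * (1 - g))) \<le> \<kappa> / N * (?S1 + ?S2)"
      using s1 s2 c0 by (intro mult_left_mono) linarith+
    then show ?thesis unfolding e .
  qed
  then have "2 * (U i \<bullet> U j) * (du i \<bullet> U j + du j \<bullet> U i) \<ge> 2 * sqrt g * (\<kappa> / N * (2 * (sqrt g * (1 - g))))"
    unfolding m using g0 by (intro mult_left_mono) auto
  moreover have alg: "\<And>s. 2 * s * (\<kappa> / N * (2 * (s * (1 - g)))) = 4 * \<kappa> / N * (s * s) * (1 - g)"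
    by (simp add: field_simps)
  moreover have sg: "sqrt g * sqrt g = g" using g0 by simp
  ultimately show ?thesis using d alg[of "sqrt g", unfolded sg] unfolding C_def by linarith
qed

definition aq :: "real^'n^'m \<Rightarrow> real^'n^'m \<Rightarrow> real" where
  "aq A B = trace (transpose A ** B)"
definition cq :: "real^'n^'m \<Rightarrow> real^'n^'m \<Rightarrow> real^'n^'m \<Rightarrow> real" where
  "cq A B C = trace ((A ** transpose A) ** (B ** transpose B) ** (C ** transpose C))"

lemma unit_dot: "norm (v::'a::real_inner) = 1 \<Longrightarrow> v \<bullet> v = 1"
  by (simp add: dot_square_norm)

lemma sq_outer: "norm v = 1 \<Longrightarrow> norm z = 1 \<Longrightarrow> sq (outer u v) (outer w z) = (u \<bullet> w)^2"
  by (simp add: sq_def transpose_outer outer_mult unit_dot tr_scale tr_outer power2_eq_square)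

lemma aq_outer: "aq (outer u v) (outer w z) = (u \<bullet> w) * (v \<bullet> z)"
  by (simp add: aq_def transpose_outer outer_mult tr_scale tr_outer)

lemma cq_outer: "norm v0 = 1 \<Longrightarrow> norm v1 = 1 \<Longrightarrow> norm v2 = 1 \<Longrightarrow>
   cq (outer u0 v0) (outer u1 v1) (outer u2 v2) = (u0 \<bullet> u1) * (u1 \<bullet> u2) * (u0 \<bullet> u2)"
  by (simp add: cq_def transpose_outer outer_mult unit_dot tr_scale tr_outer mm_scale_l)

lemma frob_tr: "frob_norm (X::real^'n^'m) = sqrt (trace (transpose X ** X))"
  unfolding frob_norm_def tr_PP by (subst sum.swap) simp

lemma frob_outer: "norm u = 1 \<Longrightarrow> norm v = 1 \<Longrightarrow> norm w = 1 \<Longrightarrow> norm z = 1 \<Longrightarrow>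
  frob_norm (outer u v - outer w z) = sqrt (2 - 2 * ((u \<bullet> w) * (v \<bullet> z)))"
  unfolding frob_tr
  by (simp add: transpose_diff transpose_outer mm_diff_r mm_diff_l outer_mult trace_sub tr_scale tr_outer
       unit_dot inner_commute)

lemma gauge:
  fixes X :: "nat \<Rightarrow> real^'n^'m"
  assumes N: "0 < N"
    and rank: "\<And>k. k < N \<Longrightarrow> \<exists>u v. norm u = 1 \<and> norm v = 1 \<and> X k = outer u v"
    and apos: "\<And>k l. k < N \<Longrightarrow> l < N \<Longrightarrow> aq (X k) (X l) > 0"
    and cpos: "\<And>k l. k < N \<Longrightarrow> l < N \<Longrightarrow> cq (X 0) (X k) (X l) > 0"
  shows "\<exists>U V. \<forall>k<N. norm (U k) = 1 \<and> norm (V k) = 1 \<and> X k = outer (U k) (V k)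
          \<and> (\<forall>l<N. U k \<bullet> U l > 0 \<and> V k \<bullet> V l > 0)"
proof -
  obtain U0 V0 where UV0: "\<And>k. k < N \<Longrightarrow> norm (U0 k) = 1 \<and> norm (V0 k) = 1 \<and> X k = outer (U0 k) (V0 k)"
    using rank by metis
  define \<sigma> where "\<sigma> k = sgn (U0 0 \<bullet> U0 k)" for k
  define U where "U k = \<sigma> k *\<^sub>R U0 k" for k
  define V where "V k = \<sigma> k *\<^sub>R V0 k" for k
  have nz: "U0 0 \<bullet> U0 k \<noteq> 0" if "k < N" for k
  proof
    assume h: "U0 0 \<bullet> U0 k = 0"
    have "cq (X 0) (X k) (X k) = 0"
      using UV0[OF N] UV0[OF that] by (simp add: cq_outer h)
    then show False using cpos[OF that that] by simp
  qed
  have sig: "\<sigma> k * \<sigma> k = 1" "\<bar>\<sigma> k\<bar> = 1" if "k < N" for k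
    using nz[OF that] unfolding \<sigma>_def by (auto simp: sgn_if)
  have P: "norm (U k) = 1 \<and> norm (V k) = 1 \<and> X k = outer (U k) (V k)" if "k < N" for k
    using UV0[OF that] sig[OF that] by (simp add: U_def V_def outer_scale_l outer_scale_r)
  have s0: "\<sigma> 0 = 1" using UV0[OF N] unfolding \<sigma>_def by (simp add: unit_dot)
  have x0: "U 0 \<bullet> U k > 0" if "k < N" for k
    using nz[OF that] s0 unfolding U_def \<sigma>_def by (simp add: sgn_if)
  have x: "U k \<bullet> U l > 0" if "k < N" "l < N" for k l
  proof -
    have "cq (X 0) (X k) (X l) = (U 0 \<bullet> U k) * (U k \<bullet> U l) * (U 0 \<bullet> U l)"
      using P[OF N] P[OF that(1)] P[OF that(2)] by (simp add: cq_outer)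
    then have "(U 0 \<bullet> U k) * (U k \<bullet> U l) * (U 0 \<bullet> U l) > 0" using cpos[OF that] by simp
    moreover have "(U 0 \<bullet> U k) * (U k \<bullet> U l) * (U 0 \<bullet> U l) = (U k \<bullet> U l) * ((U 0 \<bullet> U k) * (U 0 \<bullet> U l))"
      by (simp add: mult_ac)
    moreover have "0 < (U 0 \<bullet> U k) * (U 0 \<bullet> U l)" using x0[OF that(1)] x0[OF that(2)] by simp
    ultimately show ?thesis by (metis zero_less_mult_pos2)
  qed
  have y: "V k \<bullet> V l > 0" if "k < N" "l < N" for k l
  proof -
    have "aq (X k) (X l) = (U k \<bullet> U l) * (V k \<bullet> V l)"
      using P[OF that(1)] P[OF that(2)] by (simp add: aq_outer)
    then show ?thesis using apos[OF that] x[OF that] by (simp add: zero_less_mult_iff)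
  qed
  show ?thesis using P x y by blast
qed

lemma c_mm:
  fixes A :: "real \<Rightarrow> real^'n^'m" and B :: "real \<Rightarrow> real^'k^'n"
  shows "continuous F A \<Longrightarrow> continuous F B \<Longrightarrow> continuous F (\<lambda>t. A t ** B t)"
  using bounded_bilinear.continuous[OF bb_mm] by blast
lemma c_tp:
  fixes A :: "real \<Rightarrow> real^'n^'m"
  shows "continuous F A \<Longrightarrow> continuous F (\<lambda>t. transpose (A t))"
  using bounded_linear.continuous[OF bl_tp] by blast
lemma c_tr:
  fixes A :: "real \<Rightarrow> real^'n^'n"
  shows "continuous F A \<Longrightarrow> continuous F (\<lambda>t. trace (A t))"
  using bounded_linear.continuous[OF bl_tr] by blast

lemma right_pos_cont:
  fixes f :: "real \<Rightarrow> real"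
  assumes "continuous (at s within {0..}) f" "0 \<le> s" "f s > 0"
  shows "eventually (\<lambda>t. f t > 0) (at_right s)"
proof -
  have "(f \<longlongrightarrow> f s) (at s within {0..})" using assms(1) by (simp add: continuous_within)
  moreover have "at_right s \<le> at s within {0..}" using assms(2) by (intro at_le) auto
  ultimately have "(f \<longlongrightarrow> f s) (at_right s)" by (rule tendsto_mono[rotated])
  then show ?thesis using assms(3) by (rule order_tendstoD(1))
qed

lemma right_pos_deriv:
  fixes f :: "real \<Rightarrow> real"
  assumes "(f has_real_derivative d) (at s within {0..})" "0 \<le> s" "f s = 0" "d > 0"
  shows "eventually (\<lambda>t. f t > 0) (at_right s)"
proof -
  have "((\<lambda>y. (f y - f s) / (y - s)) \<longlongrightarrow> d) (at s within {0..})"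
    using assms(1) by (simp add: has_field_derivative_iff)
  moreover have "at_right s \<le> at s within {0..}" using assms(2) by (intro at_le) auto
  ultimately have "((\<lambda>y. (f y - f s) / (y - s)) \<longlongrightarrow> d) (at_right s)" by (rule tendsto_mono[rotated])
  then have "eventually (\<lambda>y. (f y - f s) / (y - s) > 0) (at_right s)" using assms(4) by (rule order_tendstoD(1))
  then show ?thesis using eventually_at_right_less[of s]
  proof eventually_elim
    case (elim y)
    then have "0 < (f y - f s) / (y - s)" "0 < y - s" by auto
    then have "0 < f y - f s" by (simp add: zero_less_divide_iff)
    then show ?case using assms(3) by simp
  qed
qed

lemma left_closed:
  fixes f :: "real \<Rightarrow> real"
  assumes "0 < s" "continuous (at s within {0..}) f" "\<And>t. 0 \<le> t \<Longrightarrow> t < s \<Longrightarrow> 0 \<le> f t"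
  shows "0 \<le> f s"
proof -
  have "s \<in> interior {0::real..}" using assms(1) by simp
  then have "at s within {0..} = at s" by (rule at_within_interior)
  then have "continuous (at s) f" using assms(2) by simp
  then have "(f \<longlongrightarrow> f s) (at s)" by (simp add: continuous_at)
  then have "(f \<longlongrightarrow> f s) (at_left s)" by (rule tendsto_mono[rotated]) (rule at_le, simp)
  moreover have "eventually (\<lambda>t. 0 \<le> f t) (at_left s)"
    using eventually_at_left_real[OF assms(1)] by eventually_elim (auto intro: assms(3))
  ultimately show ?thesis by (rule tendsto_lowerbound) simp
qed

lemma logistic:
  fixes a c :: real
  assumes "a > 0" "c > 0"
  defines "g \<equiv> \<lambda>t. 1 / (1 + a * exp (- (c * t)))"
  shows "\<And>t. 0 < g t" "\<And>t. g t < 1"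
    "\<And>t. (g has_real_derivative c * g t * (1 - g t)) (at t)"
    "(g \<longlongrightarrow> 1) at_top"
proof -
  fix t
  have p: "0 < a * exp (- (c * t))" using assms by simp
  show "0 < g t" using p by (simp add: g_def)
  show "g t < 1" using p by (simp add: g_def)
  have "(g has_real_derivative (a * (exp (- (c * t)) * c)) / (1 + a * exp (- (c * t)))^2) (at t)"
    unfolding g_def using p
    by (auto intro!: derivative_eq_intros simp: power2_eq_square field_simps)
  moreover have "(a * (exp (- (c * t)) * c)) / (1 + a * exp (- (c * t)))^2 = c * g t * (1 - g t)"
    using p by (simp add: g_def field_simps power2_eq_square)
  ultimately show "(g has_real_derivative c * g t * (1 - g t)) (at t)" by simp
next
  have "filterlim (\<lambda>t. c * t) at_top at_top"
    by (rule filterlim_tendsto_pos_mult_at_top[OF tendsto_const assms(2) filterlim_ident])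
  then have "filterlim (\<lambda>t. - (c * t)) at_bot at_top" by (simp add: filterlim_uminus_at_top)
  then have "((\<lambda>t. exp (- (c * t))) \<longlongrightarrow> 0) at_top" by (rule filterlim_compose[OF exp_at_bot])
  then have "((\<lambda>t. 1 / (1 + a * exp (- (c * t)))) \<longlongrightarrow> 1 / (1 + a * 0)) at_top"
    by (intro tendsto_intros) auto
  then show "(g \<longlongrightarrow> 1) at_top" by (simp add: g_def)
qed

lemma transpose_rhs: "transpose (lohe_rhs \<kappa> C (X::real^'n^'m)) = lohe_rhs \<kappa> (transpose C) (transpose X)"
  unfolding lohe_rhs_def transpose_add transpose_diff transpose_scalar matrix_transpose_mul transpose_transpose matrix_mul_assoc
  by (rule add.commute)

lemma transpose_avg: "transpose (lohe_avg N (Y::nat \<Rightarrow> real^'n^'m)) = lohe_avg N (\<lambda>k. transpose (Y k))"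
  by (simp add: lohe_avg_def transpose_scalar transpose_sum)

lemma avg_cong: "(\<And>k. k < N \<Longrightarrow> X k = Y k) \<Longrightarrow> lohe_avg N X = lohe_avg N Y"
  unfolding lohe_avg_def by (metis lessThan_iff sum.cong)

lemma init_tr:
  assumes "norm u = 1" "norm v = 1"
  shows "trace (transpose (outer u v) ** outer u v) = 1"
    "trace ((transpose (outer u v) ** outer u v) ** (transpose (outer u v) ** outer u v)) = 1"
  using assms by (simp_all add: transpose_outer outer_mult unit_dot tr_outer)

lemma c_sq: fixes A B :: "real \<Rightarrow> real^'n^'m"
  shows "continuous F A \<Longrightarrow> continuous F B \<Longrightarrow> continuous F (\<lambda>t. sq (A t) (B t))"
  unfolding sq_def by (intro c_tr c_mm c_tp)
lemma c_aq: fixes A B :: "real \<Rightarrow> real^'n^'m"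
  shows "continuous F A \<Longrightarrow> continuous F B \<Longrightarrow> continuous F (\<lambda>t. aq (A t) (B t))"
  unfolding aq_def by (intro c_tr c_mm c_tp)
lemma c_cq: fixes A B C :: "real \<Rightarrow> real^'n^'m"
  shows "continuous F A \<Longrightarrow> continuous F B \<Longrightarrow> continuous F C \<Longrightarrow> continuous F (\<lambda>t. cq (A t) (B t) (C t))"
  unfolding cq_def by (intro c_tr c_mm c_tp)

lemma logistic2:
  fixes a c :: real and g :: "real \<Rightarrow> real"
  assumes "a > 0" "c > 0" "g = (\<lambda>t. 1 / (1 + a * exp (- (c * t))))"
  shows "\<And>t. 0 < g t" "\<And>t. g t < 1"
    "\<And>t. (g has_real_derivative c * g t * (1 - g t)) (at t)"
    "(g \<longlongrightarrow> 1) at_top"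
  using logistic[OF assms(1,2)] unfolding assms(3) by auto

theorem theorem3p5:
  fixes \<kappa> :: real and N :: nat
    and T :: "nat \<Rightarrow> real \<Rightarrow> real^'n^'m"
    and u :: "nat \<Rightarrow> real^'m" and v :: "nat \<Rightarrow> real^'n"
  assumes kappa_pos: "\<kappa> > 0"
    and ode: "\<And>i t. i < N \<Longrightarrow> t \<ge> 0 \<Longrightarrow>
        (T i has_vector_derivative lohe_rhs \<kappa> (lohe_avg N (\<lambda>k. T k t)) (T i t)) (at t within {0..})"
    and init: "\<And>i. i < N \<Longrightarrow> T i 0 = outer (u i) (v i)"
    and u_unit: "\<And>i. i < N \<Longrightarrow> norm (u i) = 1"
    and v_unit: "\<And>i. i < N \<Longrightarrow> norm (v i) = 1"
    and u_pos: "\<And>i j. i < N \<Longrightarrow> j < N \<Longrightarrow> u i \<bullet> u j > 0"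
    and v_pos: "\<And>i j. i < N \<Longrightarrow> j < N \<Longrightarrow> v i \<bullet> v j > 0"
    and ij: "i < N" "j < N"
  shows "((\<lambda>t. frob_norm (T i t - T j t)) \<longlongrightarrow> 0) at_top"
proof -
  have N0: "0 < N" using ij by simp
  define D where "D k t = lohe_rhs \<kappa> (lohe_avg N (\<lambda>k. T k t)) (T k t)" for k t
  have dT: "(T k has_vector_derivative D k t) (at t within {0..})" if "k < N" "0 \<le> t" for k t
    using ode[OF that] unfolding D_def .
  define TT where "TT k t = transpose (T k t)" for k t
  have dTT: "(TT k has_vector_derivative transpose (D k t)) (at t within {0..})" if "k < N" "0 \<le> t" for k t
    using d_tp[OF dT[OF that]] unfolding TT_def .
  have DT: "transpose (D k t) = lohe_rhs \<kappa> (lohe_avg N (\<lambda>k. TT k t)) (TT k t)" for k t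
    unfolding D_def TT_def transpose_rhs transpose_avg ..
  have rank: "\<exists>p q. norm p = 1 \<and> norm q = 1 \<and> T k t = outer p q" if "k < N" "0 \<le> t" for k t
  proof (rule rank_one)
    have d: "\<And>t. 0 \<le> t \<Longrightarrow> (T k has_vector_derivative lohe_rhs \<kappa> (lohe_avg N (\<lambda>k. T k t)) (T k t)) (at t within {0..})"
      using ode[OF that(1)] by simp
    note ri = rank_inv[of "T k" \<kappa> "\<lambda>t. lohe_avg N (\<lambda>k. T k t)", OF d that(2)]
    show "trace (transpose (T k t) ** T k t) = 1"
      using ri(1) init_tr(1)[OF u_unit[OF that(1)] v_unit[OF that(1)]] init[OF that(1)] by simp
    show "trace ((transpose (T k t) ** T k t) ** (transpose (T k t) ** T k t)) = 1"
      using ri(2) init_tr(2)[OF u_unit[OF that(1)] v_unit[OF that(1)]] init[OF that(1)] by simp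
  qed
  define S where "S k l t = sq (T k t) (T l t)" for k l t
  define R where "R k l t = sq (TT k t) (TT l t)" for k l t
  define A where "A k l t = aq (T k t) (T l t)" for k l t
  define CQ where "CQ k l t = cq (T 0 t) (T k t) (T l t)" for k l t
  define CP where "CP k l t = cq (TT 0 t) (TT k t) (TT l t)" for k l t
  have rels: "(A k l t)^2 = S k l t * R k l t \<and> (CQ k l t)^2 = S 0 k t * S k l t * S 0 l t
      \<and> (CP k l t)^2 = R 0 k t * R k l t * R 0 l t"
    if h: "k < N" "l < N" "0 \<le> t" for k l t
  proof -
    obtain p q where pq: "norm p = 1" "norm q = 1" "T k t = outer p q" using rank[OF h(1,3)] by blast
    obtain p' q' where pq': "norm p' = 1" "norm q' = 1" "T l t = outer p' q'" using rank[OF h(2,3)] by blast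
    obtain p0 q0 where pq0: "norm p0 = 1" "norm q0 = 1" "T 0 t = outer p0 q0" using rank[OF N0 h(3)] by blast
    show ?thesis
      using pq pq' pq0
      by (simp add: S_def R_def A_def CQ_def CP_def TT_def transpose_outer sq_outer aq_outer cq_outer
          power_mult_distrib inner_commute)
  qed
  have frob: "frob_norm (T i t - T j t) = sqrt (2 - 2 * A i j t)" if h: "0 \<le> t" for t
  proof -
    obtain p q where pq: "norm p = 1" "norm q = 1" "T i t = outer p q" using rank[OF ij(1) h] by blast
    obtain p' q' where pq': "norm p' = 1" "norm q' = 1" "T j t = outer p' q'" using rank[OF ij(2) h] by blast
    show ?thesis using pq pq' by (simp add: frob_outer A_def aq_outer)
  qed
  have cT: "continuous (at t within {0..}) (T k)" if "k < N" "0 \<le> t" for k t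
    using has_vector_derivative_continuous[OF dT[OF that]] .
  have cTT: "continuous (at t within {0..}) (TT k)" if "k < N" "0 \<le> t" for k t
    using has_vector_derivative_continuous[OF dTT[OF that]] .
  have cont: "continuous (at t within {0..}) (S k l) \<and> continuous (at t within {0..}) (R k l)
     \<and> continuous (at t within {0..}) (A k l) \<and> continuous (at t within {0..}) (CQ k l)
     \<and> continuous (at t within {0..}) (CP k l)"
    if "k < N" "l < N" "0 \<le> t" for k l t
    using cT[OF that(1,3)] cT[OF that(2,3)] cT[OF N0 that(3)]
      cTT[OF that(1,3)] cTT[OF that(2,3)] cTT[OF N0 that(3)]
    unfolding S_def R_def A_def CQ_def CP_def
    by (intro conjI c_sq c_aq c_cq)
  have dS: "(S k l has_real_derivative dsq (T k t) (D k t) (T l t) (D l t)) (at t within {0..})"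
    if "k < N" "l < N" "0 \<le> t" for k l t
    unfolding S_def by (rule d_sq[OF dT[OF that(1,3)] dT[OF that(2,3)]])
  have dR: "(R k l has_real_derivative dsq (TT k t) (transpose (D k t)) (TT l t) (transpose (D l t))) (at t within {0..})"
    if "k < N" "l < N" "0 \<le> t" for k l t
    unfolding R_def by (rule d_sq[OF dTT[OF that(1,3)] dTT[OF that(2,3)]])
  have S0: "S k l 0 = (u k \<bullet> u l)^2" "R k l 0 = (v k \<bullet> v l)^2" "A k l 0 = (u k \<bullet> u l) * (v k \<bullet> v l)"
    "CQ k l 0 = (u 0 \<bullet> u k) * (u k \<bullet> u l) * (u 0 \<bullet> u l)"
    "CP k l 0 = (v 0 \<bullet> v k) * (v k \<bullet> v l) * (v 0 \<bullet> v l)"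
    if "k < N" "l < N" for k l
    using init[OF that(1)] init[OF that(2)] init[OF N0] u_unit[OF that(1)] u_unit[OF that(2)] u_unit[OF N0]
      v_unit[OF that(1)] v_unit[OF that(2)] v_unit[OF N0]
    by (simp_all add: S_def R_def A_def CQ_def CP_def TT_def transpose_outer sq_outer aq_outer cq_outer)
  obtain m0 where m0: "0 < m0" "\<And>k l. k < N \<Longrightarrow> l < N \<Longrightarrow> m0 \<le> S k l 0 \<and> m0 \<le> R k l 0"
  proof -
    define M where "M = (\<lambda>p. min (S (fst p) (snd p) 0) (R (fst p) (snd p) 0)) ` ({..<N} \<times> {..<N})"
    have fin: "finite M" "M \<noteq> {}" using N0 by (auto simp: M_def)
    have "\<forall>x\<in>M. 0 < x"
      using S0 u_pos v_pos by (auto simp: M_def) (metis less_irrefl u_pos, metis less_irrefl v_pos)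
    then have "0 < Min M" using fin by simp
    moreover have "Min M \<le> S k l 0 \<and> Min M \<le> R k l 0" if "k < N" "l < N" for k l
    proof -
      have "min (S k l 0) (R k l 0) \<in> M" using that by (force simp: M_def)
      then have "Min M \<le> min (S k l 0) (R k l 0)" by (rule Min_le[OF fin(1)])
      then show ?thesis by linarith
    qed
    ultimately show ?thesis using that by blast
  qed
  define c where "c = 2 * \<kappa> / N"
  have cpos: "c > 0" using kappa_pos N0 by (simp add: c_def)
  define g where "g = (\<lambda>t. 1 / (1 + (1 / m0) * exp (- (c * t))))"
  have am: "0 < 1 / m0" using m0(1) by simp
  note lg = logistic2[OF am cpos g_def]
  have gpos: "\<And>t. 0 < g t" by (rule lg(1))
  have glt: "\<And>t. g t < 1" by (rule lg(2))
  have gder: "\<And>t. (g has_real_derivative c * g t * (1 - g t)) (at t)" by (rule lg(3))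
  have glim: "(g \<longlongrightarrow> 1) at_top" by (rule lg(4))
  have "g 0 = m0 / (m0 + 1)" using m0(1) by (simp add: g_def field_simps)
  also have "\<dots> < m0 / 1" by (rule divide_strict_left_mono) (use m0(1) in auto)
  finally have gi: "g 0 < m0" by simp
  define good where "good t \<longleftrightarrow> (\<forall>k<N. \<forall>l<N. g t \<le> S k l t \<and> g t \<le> R k l t \<and> 0 < A k l t
       \<and> 0 < CQ k l t \<and> 0 < CP k l t)" for t
  have good0: "good 0"
    unfolding good_def
  proof (intro allI impI conjI)
    fix k l assume kl: "k < N" "l < N"
    show "g 0 \<le> S k l 0" "g 0 \<le> R k l 0" using m0(2)[OF kl] gi by linarith+
    show "0 < A k l 0" "0 < CQ k l 0" "0 < CP k l 0"
      using S0[OF kl] u_pos v_pos kl N0 by simp_all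
  qed
  have cg: "continuous (at t within {0..}) g" for t
    by (rule continuous_at_imp_continuous_at_within[OF DERIV_isCont[OF gder]])
  have bounds: "(S k l t = g t \<longrightarrow> dsq (T k t) (D k t) (T l t) (D l t) > c * g t * (1 - g t))
      \<and> (R k l t = g t \<longrightarrow> dsq (TT k t) (transpose (D k t)) (TT l t) (transpose (D l t)) > c * g t * (1 - g t))"
    if kl: "k < N" "l < N" and t: "0 \<le> t" and gd: "good t" for k l t
  proof -
    obtain U V where UV: "\<forall>k<N. norm (U k) = 1 \<and> norm (V k) = 1 \<and> T k t = outer (U k) (V k)
          \<and> (\<forall>l<N. U k \<bullet> U l > 0 \<and> V k \<bullet> V l > 0)"
      using gauge[of N "\<lambda>k. T k t", OF N0 rank[OF _ t]] gd unfolding good_def A_def CQ_def by blast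
    have nU: "\<And>k. k < N \<Longrightarrow> norm (U k) = 1" and nV: "\<And>k. k < N \<Longrightarrow> norm (V k) = 1"
      and Tk: "\<And>k. k < N \<Longrightarrow> T k t = outer (U k) (V k)"
      and pos: "\<And>k l. k < N \<Longrightarrow> l < N \<Longrightarrow> U k \<bullet> U l > 0 \<and> V k \<bullet> V l > 0"
      using UV by auto
    have TTk: "\<And>k. k < N \<Longrightarrow> TT k t = outer (V k) (U k)"
      using Tk by (simp add: TT_def transpose_outer)
    have avg: "lohe_avg N (\<lambda>k. T k t) = lohe_avg N (\<lambda>k. outer (U k) (V k))"
      by (rule avg_cong) (simp add: Tk)
    have avgT: "lohe_avg N (\<lambda>k. TT k t) = lohe_avg N (\<lambda>k. outer (V k) (U k))"
      by (rule avg_cong) (simp add: TTk)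
    have Sx: "S k' l' t = (U k' \<bullet> U l')^2" "R k' l' t = (V k' \<bullet> V l')^2" if "k' < N" "l' < N" for k' l'
      using that nU nV Tk TTk by (simp_all add: S_def R_def sq_outer)
    have low: "g t \<le> (U k' \<bullet> U l')^2 \<and> g t \<le> (V k' \<bullet> V l')^2" if "k' < N" "l' < N" for k' l'
    proof -
      have "g t \<le> S k' l' t \<and> g t \<le> R k' l' t" using gd that unfolding good_def by blast
      then show ?thesis using Sx[OF that] by simp
    qed
    have low': "g t \<le> (V k' \<bullet> V l')^2 \<and> g t \<le> (U k' \<bullet> U l')^2" if "k' < N" "l' < N" for k' l'
      using low[OF that] by simp
    have pos': "V k' \<bullet> V l' > 0 \<and> U k' \<bullet> U l' > 0" if "k' < N" "l' < N" for k' l'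
      using pos[OF that] by simp
    have pp: "0 < c * g t * (1 - g t)" using cpos gpos[of t] glt[of t] by simp
    have e4: "4 * \<kappa> / N * g t * (1 - g t) = 2 * (c * g t * (1 - g t))" by (simp add: c_def)
    have b1: "dsq (T k t) (D k t) (T l t) (D l t) = dsq (outer (U k) (V k)) (lohe_rhs \<kappa> (lohe_avg N (\<lambda>k. outer (U k) (V k))) (outer (U k) (V k)))
             (outer (U l) (V l)) (lohe_rhs \<kappa> (lohe_avg N (\<lambda>k. outer (U k) (V k))) (outer (U l) (V l)))"
      unfolding D_def avg Tk[OF kl(1)] Tk[OF kl(2)] ..
    have b2: "dsq (outer (U k) (V k)) (lohe_rhs \<kappa> (lohe_avg N (\<lambda>k. outer (U k) (V k))) (outer (U k) (V k)))
             (outer (U l) (V l)) (lohe_rhs \<kappa> (lohe_avg N (\<lambda>k. outer (U k) (V k))) (outer (U l) (V l))) \<ge> 4 * \<kappa> / N * g t * (1 - g t)" if "S k l t = g t"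
      by (rule ptwise[OF kappa_pos kl nU nV pos low]) (use that Sx[OF kl] gpos[of t] glt[of t] in auto)
    have b3: "dsq (TT k t) (transpose (D k t)) (TT l t) (transpose (D l t)) =
         dsq (outer (V k) (U k)) (lohe_rhs \<kappa> (lohe_avg N (\<lambda>k. outer (V k) (U k))) (outer (V k) (U k)))
             (outer (V l) (U l)) (lohe_rhs \<kappa> (lohe_avg N (\<lambda>k. outer (V k) (U k))) (outer (V l) (U l)))"
      unfolding DT avgT TTk[OF kl(1)] TTk[OF kl(2)] ..
    have b4: "dsq (outer (V k) (U k)) (lohe_rhs \<kappa> (lohe_avg N (\<lambda>k. outer (V k) (U k))) (outer (V k) (U k)))
             (outer (V l) (U l)) (lohe_rhs \<kappa> (lohe_avg N (\<lambda>k. outer (V k) (U k))) (outer (V l) (U l))) \<ge> 4 * \<kappa> / N * g t * (1 - g t)" if "R k l t = g t"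
      by (rule ptwise[OF kappa_pos kl nV nU pos' low']) (use that Sx[OF kl] gpos[of t] glt[of t] in auto)
    show ?thesis using b1 b2 b3 b4 pp e4 by auto
  qed
  have posfacts: "0 < A k l t \<and> 0 < CQ k l t \<and> 0 < CP k l t"
    if kl: "k < N" "l < N" and t: "0 \<le> t" and Sg: "\<forall>k<N. \<forall>l<N. g t \<le> S k l t \<and> g t \<le> R k l t"
      and nn: "0 \<le> A k l t" "0 \<le> CQ k l t" "0 \<le> CP k l t" for k l t
  proof -
    note r = rels[OF kl t]
    have gp: "0 < g t" by (rule gpos)
    have p1: "0 < S k l t" "0 < R k l t" "0 < S 0 k t" "0 < S 0 l t" "0 < R 0 k t" "0 < R 0 l t"
      using Sg kl N0 gp by (meson less_le_trans)+
    have "A k l t \<noteq> 0" using r p1 by (metis mult_pos_pos power_zero_numeral less_irrefl)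
    moreover have "CQ k l t \<noteq> 0" using r p1 by (metis mult_pos_pos power_zero_numeral less_irrefl)
    moreover have "CP k l t \<noteq> 0" using r p1 by (metis mult_pos_pos power_zero_numeral less_irrefl)
    ultimately show ?thesis using nn by linarith
  qed
  have allgood: "good t" if t0: "0 \<le> t" for t
  proof (rule ccontr)
    assume nt: "\<not> good t"
    define B where "B = {t. 0 \<le> t \<and> \<not> good t}"
    have Bne: "t \<in> B" using t0 nt by (simp add: B_def)
    have bdd: "bdd_below B" unfolding bdd_below_def B_def by auto
    define ts where "ts = Inf B"
    have ts0: "0 \<le> ts" unfolding ts_def using Bne by (intro cInf_greatest) (auto simp: B_def)
    have before: "good \<tau>" if "0 \<le> \<tau>" "\<tau> < ts" for \<tau>
    proof (rule ccontr)
      assume "\<not> good \<tau>"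
      then have "\<tau> \<in> B" using that by (simp add: B_def)
      then have "ts \<le> \<tau>" unfolding ts_def by (rule cInf_lower[OF _ bdd])
      then show False using that by simp
    qed
    have gts: "good ts"
    proof (cases "ts = 0")
      case True then show ?thesis using good0 by simp
    next
      case False
      then have tsp: "0 < ts" using ts0 by simp
      have Sg: "\<forall>k<N. \<forall>l<N. g ts \<le> S k l ts \<and> g ts \<le> R k l ts"
      proof (intro allI impI)
        fix k l assume kl: "k < N" "l < N"
        have cc: "continuous (at ts within {0..}) (S k l)" "continuous (at ts within {0..}) (R k l)"
          "continuous (at ts within {0..}) (A k l)" "continuous (at ts within {0..}) (CQ k l)"
          "continuous (at ts within {0..}) (CP k l)" using cont[OF kl ts0] by auto
        have "0 \<le> S k l ts - g ts"
          by (rule left_closed[OF tsp]) (use cc cg before kl in \<open>auto intro!: continuous_intros simp: good_def\<close>)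
        moreover have "0 \<le> R k l ts - g ts"
          by (rule left_closed[OF tsp]) (use cc cg before kl in \<open>auto intro!: continuous_intros simp: good_def\<close>)
        ultimately show "g ts \<le> S k l ts \<and> g ts \<le> R k l ts" by simp
      qed
      show ?thesis unfolding good_def
      proof (intro allI impI)
        fix k l assume kl: "k < N" "l < N"
        have cc: "continuous (at ts within {0..}) (S k l)" "continuous (at ts within {0..}) (R k l)"
          "continuous (at ts within {0..}) (A k l)" "continuous (at ts within {0..}) (CQ k l)"
          "continuous (at ts within {0..}) (CP k l)" using cont[OF kl ts0] by auto
        have nn: "0 \<le> A k l ts" "0 \<le> CQ k l ts" "0 \<le> CP k l ts"
          by (rule left_closed[OF tsp]; use cc before kl in \<open>auto simp: good_def less_imp_le\<close>)+
        show "g ts \<le> S k l ts \<and> g ts \<le> R k l ts \<and> 0 < A k l ts \<and> 0 < CQ k l ts \<and> 0 < CP k l ts"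
          using Sg kl posfacts[OF kl ts0 Sg nn] by simp
      qed
    qed
    have ev: "eventually good (at_right ts)"
    proof -
      have "\<forall>k\<in>{..<N}. \<forall>l\<in>{..<N}. eventually (\<lambda>t. g t \<le> S k l t \<and> g t \<le> R k l t \<and> 0 < A k l t
              \<and> 0 < CQ k l t \<and> 0 < CP k l t) (at_right ts)"
      proof (intro ballI)
        fix k l assume "k \<in> {..<N}" "l \<in> {..<N}"
        then have kl: "k < N" "l < N" by auto
        have cc: "continuous (at ts within {0..}) (S k l)" "continuous (at ts within {0..}) (R k l)"
          "continuous (at ts within {0..}) (A k l)" "continuous (at ts within {0..}) (CQ k l)"
          "continuous (at ts within {0..}) (CP k l)" using cont[OF kl ts0] by auto
        have gk: "g ts \<le> S k l ts \<and> g ts \<le> R k l ts \<and> 0 < A k l ts \<and> 0 < CQ k l ts \<and> 0 < CP k l ts"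
          using gts kl unfolding good_def by blast
        note bd = bounds[OF kl ts0 gts]
        have eS: "eventually (\<lambda>t. 0 < S k l t - g t) (at_right ts)"
        proof (cases "S k l ts = g ts")
          case True
          have "((\<lambda>t. S k l t - g t) has_real_derivative dsq (T k ts) (D k ts) (T l ts) (D l ts) - c * g ts * (1 - g ts)) (at ts within {0..})"
            by (rule DERIV_diff[OF dS[OF kl ts0] has_field_derivative_at_within[OF gder]])
          then show ?thesis by (rule right_pos_deriv[OF _ ts0]) (use True bd in auto)
        next
          case False
          then show ?thesis using gk by (intro right_pos_cont[OF _ ts0]) (auto intro!: continuous_intros cc cg)
        qed
        have eR: "eventually (\<lambda>t. 0 < R k l t - g t) (at_right ts)"
        proof (cases "R k l ts = g ts")
          case True
          have "((\<lambda>t. R k l t - g t) has_real_derivative dsq (TT k ts) (transpose (D k ts)) (TT l ts) (transpose (D l ts)) - c * g ts * (1 - g ts)) (at ts within {0..})"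
            by (rule DERIV_diff[OF dR[OF kl ts0] has_field_derivative_at_within[OF gder]])
          then show ?thesis by (rule right_pos_deriv[OF _ ts0]) (use True bd in auto)
        next
          case False
          then show ?thesis using gk by (intro right_pos_cont[OF _ ts0]) (auto intro!: continuous_intros cc cg)
        qed
        have eA: "eventually (\<lambda>t. 0 < A k l t) (at_right ts)"
          using cc gk by (intro right_pos_cont[OF _ ts0]) auto
        have eC: "eventually (\<lambda>t. 0 < CQ k l t) (at_right ts)"
          using cc gk by (intro right_pos_cont[OF _ ts0]) auto
        have eP: "eventually (\<lambda>t. 0 < CP k l t) (at_right ts)"
          using cc gk by (intro right_pos_cont[OF _ ts0]) auto
        show "eventually (\<lambda>t. g t \<le> S k l t \<and> g t \<le> R k l t \<and> 0 < A k l t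
              \<and> 0 < CQ k l t \<and> 0 < CP k l t) (at_right ts)"
          using eS eR eA eC eP by eventually_elim auto
      qed
      then have "\<forall>k\<in>{..<N}. eventually (\<lambda>t. \<forall>l\<in>{..<N}. g t \<le> S k l t \<and> g t \<le> R k l t \<and> 0 < A k l t
              \<and> 0 < CQ k l t \<and> 0 < CP k l t) (at_right ts)"
        by (auto intro: eventually_ball_finite)
      then have "eventually (\<lambda>t. \<forall>k\<in>{..<N}. \<forall>l\<in>{..<N}. g t \<le> S k l t \<and> g t \<le> R k l t \<and> 0 < A k l t
              \<and> 0 < CQ k l t \<and> 0 < CP k l t) (at_right ts)"
        by (auto intro: eventually_ball_finite)
      then show ?thesis by eventually_elim (auto simp: good_def)
    qed
    then obtain b where b: "b > ts" "\<And>y. y > ts \<Longrightarrow> y < b \<Longrightarrow> good y"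
      unfolding eventually_at_right_field by blast
    have "b \<le> ts" unfolding ts_def
    proof (rule cInf_greatest)
      show "B \<noteq> {}" using Bne by auto
      fix x assume x: "x \<in> B"
      then have "ts \<le> x" unfolding ts_def by (rule cInf_lower[OF _ bdd])
      moreover have "\<not> good x" using x by (simp add: B_def)
      ultimately show "b \<le> x" using b gts by (metis le_less not_le)
    qed
    then show False using b by simp
  qed
  have Alow: "g t \<le> A i j t" if t: "0 \<le> t" for t
  proof -
    have gd: "good t" by (rule allgood[OF t])
    then have h: "g t \<le> S i j t" "g t \<le> R i j t" "0 < A i j t" using ij unfolding good_def by auto
    have "(A i j t)^2 = S i j t * R i j t" using rels[OF ij t] by simp
    moreover have "g t * g t \<le> S i j t * R i j t" using h gpos[of t] by (intro mult_mono) auto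
    ultimately have "(g t)^2 \<le> (A i j t)^2" by (simp add: power2_eq_square)
    then show ?thesis using h(3) gpos[of t] by (simp add: power2_le_iff_abs_le abs_of_pos)
  qed
  show ?thesis
  proof (rule tendsto_sandwich[where f = "\<lambda>t. 0" and h = "\<lambda>t. sqrt (2 - 2 * g t)"])
    show "eventually (\<lambda>t. 0 \<le> frob_norm (T i t - T j t)) at_top"
      by (intro always_eventually allI) (simp add: frob_norm_def sum_nonneg)
    show "eventually (\<lambda>t. frob_norm (T i t - T j t) \<le> sqrt (2 - 2 * g t)) at_top"
      using eventually_ge_at_top[of 0] by eventually_elim (use frob Alow in auto)
    show "((\<lambda>t. 0) \<longlongrightarrow> 0) at_top" by simp
    have "((\<lambda>t. sqrt (2 - 2 * g t)) \<longlongrightarrow> sqrt (2 - 2 * 1)) at_top"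
      by (intro tendsto_intros glim)
    then show "((\<lambda>t. sqrt (2 - 2 * g t)) \<longlongrightarrow> 0) at_top" by simp
  qed
qed

end
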